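(* Let $k$ be a field, $\mathsf{E}$ a locally finite $k$-linear category, $P$ a locally finite left $\mathsf{E}$-module, and $(Q_\xi)_{\xi\in\Xi}$ an arbitrary family of big $\mathsf{E}$-submodules of $P$. Then $\bigcap_{\xi\in\Xi}Q_\xi$ is a big $\mathsf{E}$-submodule of $P$.
   Context: A small $k$-linear category $\mathsf{E}$ has $k$-vector spaces $\operatorname{Hom}_\mathsf{E}(x,y)$, $k$-bilinear associative composition and identities with $\mathrm{id}_x\ne0$. A left $\mathsf{E}$-module is a $k$-linear functor $P:\mathsf{E}\to k\text{-Vect}$; it is locally finite if every $P(x)$ is finite-dimensional. Write $x\preceq y$ if there are $n\ge1$ and objects $x=z_0,\dots,z_n=y$ with $\operatorname{Hom}_\mathsf{E}(z_{i-1},z_i)\neq0$ for all $i$. $\mathsf{E}$ is locally finite if all Hom spaces are finite-dimensional and every $\{z:x\preceq z\preceq y\}$ is finite. A left $\mathsf{E}$-module $T$ is contrafinite if for every object $y$ there is a finite set of objects $A$ such that the action map $\operatorname{Hom}_\mathsf{E}(x,y)\otimes_kT(x)\to T(y)$ vanishes for all $x\notin A$. A submodule $Q\subseteq P$ is big if $P/Q$ is contrafinite. *)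

theory Defs
  imports Complex_Main
begin

definition fin_dim_subspace :: "('k::field \<Rightarrow> 'b::ab_group_add \<Rightarrow> 'b) \<Rightarrow> 'b set \<Rightarrow> bool" where
  "fin_dim_subspace s S \<longleftrightarrow> module.subspace s S \<and>
     (\<exists>B. finite B \<and> B \<subseteq> S \<and> module.span s B = S)"

text \<open>Hom x y is a subspace of an
 ambient k-vector space 'm (with scalar multiplication sM); composition
 cmp x y z g f : Hom y z \<times> Hom x y \<rightarrow> Hom x z (g after f); identities ident x.\<close>
definition klinear_cat ::
  "('k::field \<Rightarrow> 'm::ab_group_add \<Rightarrow> 'm) \<Rightarrow> ('o \<Rightarrow> 'o \<Rightarrow> 'm set)
   \<Rightarrow> ('o \<Rightarrow> 'o \<Rightarrow> 'o \<Rightarrow> 'm \<Rightarrow> 'm \<Rightarrow> 'm) \<Rightarrow> ('o \<Rightarrow> 'm) \<Rightarrow> bool" where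
  "klinear_cat sM Hom cmp ident \<longleftrightarrow>
     vector_space sM \<and>
     (\<forall>x y. module.subspace sM (Hom x y)) \<and>
     (\<forall>x y z. \<forall>g\<in>Hom y z. \<forall>f\<in>Hom x y. cmp x y z g f \<in> Hom x z) \<and>
     (\<forall>x y z. \<forall>g\<in>Hom y z. \<forall>f1\<in>Hom x y. \<forall>f2\<in>Hom x y.
        cmp x y z g (f1 + f2) = cmp x y z g f1 + cmp x y z g f2) \<and>
     (\<forall>x y z. \<forall>g1\<in>Hom y z. \<forall>g2\<in>Hom y z. \<forall>f\<in>Hom x y.
        cmp x y z (g1 + g2) f = cmp x y z g1 f + cmp x y z g2 f) \<and>
     (\<forall>x y z c. \<forall>g\<in>Hom y z. \<forall>f\<in>Hom x y.
        cmp x y z (sM c g) f = sM c (cmp x y z g f) \<and>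
        cmp x y z g (sM c f) = sM c (cmp x y z g f)) \<and>
     (\<forall>w x y z. \<forall>h\<in>Hom y z. \<forall>g\<in>Hom x y. \<forall>f\<in>Hom w x.
        cmp w x z (cmp x y z h g) f = cmp w y z h (cmp w x y g f)) \<and>
     (\<forall>x. ident x \<in> Hom x x \<and> ident x \<noteq> 0) \<and>
     (\<forall>x y. \<forall>f\<in>Hom x y. cmp x y y (ident y) f = f \<and> cmp x x y f (ident x) = f)"

definition cat_prec :: "('o \<Rightarrow> 'o \<Rightarrow> 'm::zero set) \<Rightarrow> 'o \<Rightarrow> 'o \<Rightarrow> bool" where
  "cat_prec Hom x y \<longleftrightarrow> (\<lambda>a b. Hom a b \<noteq> {0})\<^sup>+\<^sup>+ x y"

definition locally_finite_cat ::
  "('k::field \<Rightarrow> 'm::ab_group_add \<Rightarrow> 'm) \<Rightarrow> ('o \<Rightarrow> 'o \<Rightarrow> 'm set) \<Rightarrow> bool" where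
  "locally_finite_cat sM Hom \<longleftrightarrow>
     (\<forall>x y. fin_dim_subspace sM (Hom x y)) \<and>
     (\<forall>x y. finite {z. cat_prec Hom x z \<and> cat_prec Hom z y})"

text \<open>A left E-module (k-linear functor E \<rightarrow> k-Vect): P x is a subspace of an ambient
 k-vector space 'v (scalar multiplication sV); act x y f v is the action of f \<in> Hom x y.\<close>
definition left_module ::
  "('k::field \<Rightarrow> 'm::ab_group_add \<Rightarrow> 'm) \<Rightarrow> ('o \<Rightarrow> 'o \<Rightarrow> 'm set)
   \<Rightarrow> ('o \<Rightarrow> 'o \<Rightarrow> 'o \<Rightarrow> 'm \<Rightarrow> 'm \<Rightarrow> 'm) \<Rightarrow> ('o \<Rightarrow> 'm)
   \<Rightarrow> ('k \<Rightarrow> 'v::ab_group_add \<Rightarrow> 'v) \<Rightarrow> ('o \<Rightarrow> 'v set) \<Rightarrow> ('o \<Rightarrow> 'o \<Rightarrow> 'm \<Rightarrow> 'v \<Rightarrow> 'v) \<Rightarrow> bool" where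
  "left_module sM Hom cmp ident sV P act \<longleftrightarrow>
     vector_space sV \<and>
     (\<forall>x. module.subspace sV (P x)) \<and>
     (\<forall>x y. \<forall>f\<in>Hom x y. \<forall>v\<in>P x. act x y f v \<in> P y) \<and>
     (\<forall>x y. \<forall>f\<in>Hom x y. \<forall>v1\<in>P x. \<forall>v2\<in>P x.
        act x y f (v1 + v2) = act x y f v1 + act x y f v2) \<and>
     (\<forall>x y. \<forall>f1\<in>Hom x y. \<forall>f2\<in>Hom x y. \<forall>v\<in>P x.
        act x y (f1 + f2) v = act x y f1 v + act x y f2 v) \<and>
     (\<forall>x y c. \<forall>f\<in>Hom x y. \<forall>v\<in>P x.
        act x y (sM c f) v = sV c (act x y f v) \<and> act x y f (sV c v) = sV c (act x y f v)) \<and>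
     (\<forall>x y z. \<forall>g\<in>Hom y z. \<forall>f\<in>Hom x y. \<forall>v\<in>P x.
        act x z (cmp x y z g f) v = act y z g (act x y f v)) \<and>
     (\<forall>x. \<forall>v\<in>P x. act x x (ident x) v = v)"

definition locally_finite_module :: "('k::field \<Rightarrow> 'v::ab_group_add \<Rightarrow> 'v) \<Rightarrow> ('o \<Rightarrow> 'v set) \<Rightarrow> bool" where
  "locally_finite_module sV P \<longleftrightarrow> (\<forall>x. fin_dim_subspace sV (P x))"

definition submodule ::
  "('k::field \<Rightarrow> 'v::ab_group_add \<Rightarrow> 'v) \<Rightarrow> ('o \<Rightarrow> 'o \<Rightarrow> 'm set)
   \<Rightarrow> ('o \<Rightarrow> 'o \<Rightarrow> 'm \<Rightarrow> 'v \<Rightarrow> 'v) \<Rightarrow> ('o \<Rightarrow> 'v set) \<Rightarrow> ('o \<Rightarrow> 'v set) \<Rightarrow> bool" where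
  "submodule sV Hom act P Q \<longleftrightarrow>
     (\<forall>x. Q x \<subseteq> P x \<and> module.subspace sV (Q x)) \<and>
     (\<forall>x y. \<forall>f\<in>Hom x y. \<forall>v\<in>Q x. act x y f v \<in> Q y)"

text \<open>Contrafinite, for a module T with action actT and zero vectors zT y of T y.
 The action map Hom(x,y) \<otimes> T(x) \<rightarrow> T(y) vanishes iff it vanishes on all pure tensors.\<close>
definition contrafinite ::
  "('o \<Rightarrow> 'o \<Rightarrow> 'm set) \<Rightarrow> ('o \<Rightarrow> 't set) \<Rightarrow> ('o \<Rightarrow> 'o \<Rightarrow> 'm \<Rightarrow> 't \<Rightarrow> 't) \<Rightarrow> ('o \<Rightarrow> 't) \<Rightarrow> bool" where
  "contrafinite Hom T actT zT \<longleftrightarrow>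
     (\<forall>y. \<exists>A. finite A \<and> (\<forall>x. x \<notin> A \<longrightarrow> (\<forall>f\<in>Hom x y. \<forall>t\<in>T x. actT x y f t = zT y)))"

text \<open>Quotient module P/Q: elements of (P/Q)(x) are the cosets v + Q x, v \<in> P x;
 zero of (P/Q)(y) is Q y; the action is induced from that of P on representatives.\<close>
definition coset :: "'v::ab_group_add set \<Rightarrow> 'v \<Rightarrow> 'v set" where
  "coset S v = (\<lambda>q. v + q) ` S"

definition quot_carrier :: "('o \<Rightarrow> 'v::ab_group_add set) \<Rightarrow> ('o \<Rightarrow> 'v set) \<Rightarrow> 'o \<Rightarrow> 'v set set" where
  "quot_carrier P Q x = coset (Q x) ` P x"

definition quot_act ::
  "('o \<Rightarrow> 'o \<Rightarrow> 'm \<Rightarrow> 'v::ab_group_add \<Rightarrow> 'v) \<Rightarrow> ('o \<Rightarrow> 'v set) \<Rightarrow> 'o \<Rightarrow> 'o \<Rightarrow> 'm \<Rightarrow> 'v set \<Rightarrow> 'v set" where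
  "quot_act act Q x y f C = coset (Q y) (act x y f (SOME v. v \<in> C))"

definition big_submodule ::
  "('k::field \<Rightarrow> 'v::ab_group_add \<Rightarrow> 'v) \<Rightarrow> ('o \<Rightarrow> 'o \<Rightarrow> 'm set)
   \<Rightarrow> ('o \<Rightarrow> 'o \<Rightarrow> 'm \<Rightarrow> 'v \<Rightarrow> 'v) \<Rightarrow> ('o \<Rightarrow> 'v set) \<Rightarrow> ('o \<Rightarrow> 'v set) \<Rightarrow> bool" where
  "big_submodule sV Hom act P Q \<longleftrightarrow>
     submodule sV Hom act P Q \<and>
     contrafinite Hom (quot_carrier P Q) (quot_act act Q) Q"

end

theory Submission
  imports Defs
begin

lemma (in vector_space) dim_eq_sub_aux:
  assumes "subspace S" "subspace T" "S \<subseteq> T" "T \<subseteq> span W" "finite W" "dim T \<le> dim S"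
  shows "S = T"
proof (rule ccontr)
  assume ne: "S \<noteq> T"
  then obtain t where t: "t \<in> T" "t \<notin> S" using assms(3) by blast
  obtain B where B: "B \<subseteq> S" "independent B" "S \<subseteq> span B" "card B = dim S"
    using basis_exists by blast
  obtain C where C: "C \<subseteq> T" "independent C" "T \<subseteq> span C" "card C = dim T"
    using basis_exists by blast
  have finC: "finite C"
    using independent_span_bound[OF assms(5) C(2)] C(1) assms(4) by blast
  have spB: "span B \<subseteq> S" using B(1) assms(1) span_minimal by blast
  have tB: "t \<notin> span B" using spB t by blast
  have ind: "independent (insert t B)" using independent_insertI[OF tB B(2)] .
  have sub: "insert t B \<subseteq> span C" using C(3) t B(1) assms(3) by blast
  have bd: "finite (insert t B) \<and> card (insert t B) \<le> card C"
    using independent_span_bound[OF finC ind sub] .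
  have "t \<notin> B" using t B(1) by blast
  then have "card (insert t B) = card B + 1" using bd by auto
  then show False using bd B(4) C(4) assms(6) by linarith
qed

lemma coset_self:
  assumes "module s" "module.subspace s S" "w \<in> S"
  shows "coset S w = S"
proof -
  interpret module s by fact
  show ?thesis
  proof
    show "coset S w \<subseteq> S" unfolding coset_def using assms subspace_add by blast
    show "S \<subseteq> coset S w"
    proof
      fix q assume "q \<in> S"
      then have "q - w \<in> S" using assms subspace_diff by blast
      moreover have "q = w + (q - w)" by simp
      ultimately show "q \<in> coset S w" unfolding coset_def by blast
    qed
  qed
qed

lemma coset_zeroD:
  assumes "module s" "module.subspace s S" "coset S w = S"
  shows "w \<in> S"
proof -
  interpret module s by fact
  have "0 \<in> S" using assms subspace_0 by blast
  then have "w + 0 \<in> coset S w" unfolding coset_def by blast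
  then show ?thesis using assms by simp
qed

lemma some_in_coset:
  assumes "0 \<in> S"
  shows "(SOME v. v \<in> coset S u) \<in> coset S u"
proof -
  have "u + 0 \<in> coset S u" using assms unfolding coset_def by blast
  then show ?thesis by (rule someI)
qed

theorem lemma4p10:
  fixes sM :: "'k::field \<Rightarrow> 'm::ab_group_add \<Rightarrow> 'm"
    and Hom :: "'o \<Rightarrow> 'o \<Rightarrow> 'm set"
    and cmp :: "'o \<Rightarrow> 'o \<Rightarrow> 'o \<Rightarrow> 'm \<Rightarrow> 'm \<Rightarrow> 'm"
    and ident :: "'o \<Rightarrow> 'm"
    and sV :: "'k \<Rightarrow> 'v::ab_group_add \<Rightarrow> 'v"
    and P :: "'o \<Rightarrow> 'v set"
    and act :: "'o \<Rightarrow> 'o \<Rightarrow> 'm \<Rightarrow> 'v \<Rightarrow> 'v"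
    and Xi :: "'i set"
    and Q :: "'i \<Rightarrow> 'o \<Rightarrow> 'v set"
  assumes "klinear_cat sM Hom cmp ident"
    and "locally_finite_cat sM Hom"
    and "left_module sM Hom cmp ident sV P act"
    and "locally_finite_module sV P"
    and "\<forall>\<xi>\<in>Xi. big_submodule sV Hom act P (Q \<xi>)"
  shows "big_submodule sV Hom act P (\<lambda>x. P x \<inter> (\<Inter>\<xi>\<in>Xi. Q \<xi> x))"
proof -
  define R where "R = (\<lambda>x. P x \<inter> (\<Inter>\<xi>\<in>Xi. Q \<xi> x))"
  have LM: "left_module sM Hom cmp ident sV P act" by fact
  have vs: "vector_space sV" using LM unfolding left_module_def by blast
  interpret vector_space sV by (rule vs)
  have md: "module sV" by unfold_locales
  note LMu = LM[unfolded left_module_def]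
  have Psub: "\<And>x. subspace (P x)" using conjunct1[OF conjunct2[OF LMu]] by blast
  have Pact: "\<And>x y f v. f \<in> Hom x y \<Longrightarrow> v \<in> P x \<Longrightarrow> act x y f v \<in> P y"
    using conjunct1[OF conjunct2[OF conjunct2[OF LMu]]] by blast
  have Padd: "\<And>x y f v1 v2. f \<in> Hom x y \<Longrightarrow> v1 \<in> P x \<Longrightarrow> v2 \<in> P x \<Longrightarrow>
      act x y f (v1 + v2) = act x y f v1 + act x y f v2"
    using conjunct1[OF conjunct2[OF conjunct2[OF conjunct2[OF LMu]]]] by blast
  have QS: "\<And>\<xi>. \<xi> \<in> Xi \<Longrightarrow> submodule sV Hom act P (Q \<xi>)"
    using assms(5) unfolding big_submodule_def by blast
  have QC: "\<And>\<xi>. \<xi> \<in> Xi \<Longrightarrow> contrafinite Hom (quot_carrier P (Q \<xi>)) (quot_act act (Q \<xi>)) (Q \<xi>)"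
    using assms(5) unfolding big_submodule_def by blast
  have Qsub: "\<And>\<xi> x. \<xi> \<in> Xi \<Longrightarrow> subspace (Q \<xi> x) \<and> Q \<xi> x \<subseteq> P x"
    using QS unfolding submodule_def by blast
  have Qact: "\<And>\<xi> x y f v. \<xi> \<in> Xi \<Longrightarrow> f \<in> Hom x y \<Longrightarrow> v \<in> Q \<xi> x \<Longrightarrow> act x y f v \<in> Q \<xi> y"
    using QS unfolding submodule_def by blast
  have Rsub: "\<And>x. subspace (R x)"
  proof -
    fix x
    have "subspace (\<Inter> (insert (P x) ((\<lambda>\<xi>. Q \<xi> x) ` Xi)))"
      by (rule subspace_Inter) (use Psub Qsub in blast)
    moreover have "\<Inter> (insert (P x) ((\<lambda>\<xi>. Q \<xi> x) ` Xi)) = R x" unfolding R_def by auto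
    ultimately show "subspace (R x)" by simp
  qed
  have sm1: "\<forall>x. R x \<subseteq> P x \<and> module.subspace sV (R x)"
    using Rsub unfolding R_def by simp
  have sm2: "\<forall>x y. \<forall>f\<in>Hom x y. \<forall>v\<in>R x. act x y f v \<in> R y"
  proof (intro allI ballI)
    fix x y f v assume f: "f \<in> Hom x y" and v: "v \<in> R x"
    have "act x y f v \<in> P y" using Pact[OF f] v unfolding R_def by simp
    moreover have "act x y f v \<in> Q \<xi> y" if "\<xi> \<in> Xi" for \<xi>
      using Qact[OF that f] v that unfolding R_def by simp
    ultimately show "act x y f v \<in> R y" unfolding R_def by simp
  qed
  have sm: "submodule sV Hom act P R"
    unfolding submodule_def using sm1 sm2 by (rule conjI)
  have cf: "contrafinite Hom (quot_carrier P R) (quot_act act R) R"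
    unfolding contrafinite_def
  proof
    fix y
    obtain W where W: "finite W" "span W = P y"
      using assms(4) unfolding locally_finite_module_def fin_dim_subspace_def by blast
    define S where "S = (\<lambda>F. P y \<inter> (\<Inter>\<xi>\<in>F. Q \<xi> y))"
    have Ssub: "\<And>F. F \<subseteq> Xi \<Longrightarrow> subspace (S F)"
    proof -
      fix F assume F: "F \<subseteq> Xi"
      have "subspace (\<Inter> (insert (P y) ((\<lambda>\<xi>. Q \<xi> y) ` F)))"
        by (rule subspace_Inter) (use Psub Qsub F in blast)
      moreover have "\<Inter> (insert (P y) ((\<lambda>\<xi>. Q \<xi> y) ` F)) = S F" unfolding S_def by auto
      ultimately show "subspace (S F)" by simp
    qed
    obtain F0 where F0: "finite F0" "F0 \<subseteq> Xi"
      and mn: "\<And>F. finite F \<and> F \<subseteq> Xi \<Longrightarrow> dim (S F0) \<le> dim (S F)"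
      using ex_has_least_nat[of "\<lambda>F. finite F \<and> F \<subseteq> Xi" "{}" "\<lambda>F. dim (S F)"] by auto
    have keyS: "S F0 \<subseteq> Q \<xi> y" if "\<xi> \<in> Xi" for \<xi>
    proof -
      have eq: "S (insert \<xi> F0) = S F0"
      proof (rule dim_eq_sub_aux[of _ _ W])
        show "subspace (S (insert \<xi> F0))" using Ssub F0 that by blast
        show "subspace (S F0)" using Ssub F0 by blast
        show "S (insert \<xi> F0) \<subseteq> S F0" unfolding S_def by blast
        show "S F0 \<subseteq> span W" using W unfolding S_def by blast
        show "finite W" by fact
        show "dim (S F0) \<le> dim (S (insert \<xi> F0))" using mn F0 that by simp
      qed
      show ?thesis using eq unfolding S_def by blast
    qed
    have "\<forall>\<xi>\<in>F0. \<exists>A. finite A \<and> (\<forall>x. x \<notin> A \<longrightarrow> (\<forall>f\<in>Hom x y. \<forall>t\<in>quot_carrier P (Q \<xi>) x.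
          quot_act act (Q \<xi>) x y f t = Q \<xi> y))"
      using QC F0(2) unfolding contrafinite_def by blast
    then have "\<exists>A. \<forall>\<xi>\<in>F0. finite (A \<xi>) \<and> (\<forall>x. x \<notin> A \<xi> \<longrightarrow> (\<forall>f\<in>Hom x y. \<forall>t\<in>quot_carrier P (Q \<xi>) x.
          quot_act act (Q \<xi>) x y f t = Q \<xi> y))"
      by (rule bchoice)
    then obtain A where A0: "\<forall>\<xi>\<in>F0. finite (A \<xi>) \<and> (\<forall>x. x \<notin> A \<xi> \<longrightarrow> (\<forall>f\<in>Hom x y. \<forall>t\<in>quot_carrier P (Q \<xi>) x.
          quot_act act (Q \<xi>) x y f t = Q \<xi> y))" ..
    have A: "\<And>\<xi>. \<xi> \<in> F0 \<Longrightarrow> finite (A \<xi>) \<and> (\<forall>x. x \<notin> A \<xi> \<longrightarrow> (\<forall>f\<in>Hom x y. \<forall>t\<in>quot_carrier P (Q \<xi>) x.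
          quot_act act (Q \<xi>) x y f t = Q \<xi> y))"
      using A0 by (rule bspec)
    show "\<exists>A. finite A \<and> (\<forall>x. x \<notin> A \<longrightarrow> (\<forall>f\<in>Hom x y. \<forall>t\<in>quot_carrier P R x.
          quot_act act R x y f t = R y))"
    proof (intro exI conjI allI impI ballI)
      show "finite (\<Union>\<xi>\<in>F0. A \<xi>)" using A F0 by blast
    next
      fix x f t assume x: "x \<notin> (\<Union>\<xi>\<in>F0. A \<xi>)" and f: "f \<in> Hom x y" and t: "t \<in> quot_carrier P R x"
      obtain v0 where v0: "v0 \<in> P x" "t = coset (R x) v0" using t unfolding quot_carrier_def by blast
      define u where "u = (SOME v. v \<in> t)"
      have R0: "0 \<in> R x" using Rsub subspace_0 by blast
      have "u \<in> coset (R x) v0" unfolding u_def v0(2) using some_in_coset[OF R0] .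
      then obtain q where q: "q \<in> R x" "u = v0 + q" unfolding coset_def by blast
      have uP: "u \<in> P x" using q v0 Psub subspace_add unfolding R_def by blast
      have inQ: "act x y f u \<in> Q \<xi> y" if xi: "\<xi> \<in> F0" for \<xi>
      proof -
        have xiX: "\<xi> \<in> Xi" using xi F0 by blast
        have Qs: "subspace (Q \<xi> x)" "subspace (Q \<xi> y)" "Q \<xi> x \<subseteq> P x" using Qsub xiX by blast+
        have "x \<notin> A \<xi>" using x xi by blast
        moreover have "coset (Q \<xi> x) u \<in> quot_carrier P (Q \<xi>) x"
          unfolding quot_carrier_def using uP by blast
        ultimately have e: "quot_act act (Q \<xi>) x y f (coset (Q \<xi> x) u) = Q \<xi> y"
          using A[OF xi] f by blast
        define u' where "u' = (SOME v. v \<in> coset (Q \<xi> x) u)"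
        have "u' \<in> coset (Q \<xi> x) u" unfolding u'_def
          by (rule some_in_coset) (use Qs subspace_0 in blast)
        then obtain q' where q': "q' \<in> Q \<xi> x" "u' = u + q'" unfolding coset_def by blast
        have "coset (Q \<xi> y) (act x y f u') = Q \<xi> y"
          using e unfolding quot_act_def u'_def .
        then have a1: "act x y f u' \<in> Q \<xi> y" using coset_zeroD[OF md] Qs by blast
        have a2: "act x y f q' \<in> Q \<xi> y" using Qact xiX f q' by blast
        have "act x y f u' = act x y f u + act x y f q'"
          using Padd[OF f uP] q' Qs by blast
        then have "act x y f u = act x y f u' - act x y f q'" by simp
        then show ?thesis using subspace_diff[OF Qs(2) a1 a2] by simp
      qed
      have "act x y f u \<in> R y"
      proof -
        have "act x y f u \<in> S F0" unfolding S_def using inQ Pact f uP by blast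
        then show ?thesis unfolding R_def using keyS unfolding S_def by blast
      qed
      then show "quot_act act R x y f t = R y"
        unfolding quot_act_def u_def[symmetric] using coset_self[OF md] Rsub by blast
    qed
  qed
  show ?thesis using sm cf unfolding big_submodule_def R_def by blast
qed

end
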